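(* If an undirected graph $\mathcal G$ can be represented with a set of $t$ types, then $\nu(\mathcal G)\le t/3$.
   Context: An undirected graph $\mathcal G=(V,E)$ can be represented by a set of types $T$ if there is a map $f:V\to T$ such that for any $t_1,t_2\in T$, either every pair of distinct vertices $u,v$ with $f(u)=t_1$, $f(v)=t_2$ is an edge, or no such pair is an edge; moreover (standing convention) no edge joins two vertices of the same type. A set of odd cycles $\{c_1,\dots,c_l\}$ is independent if the cycles are pairwise vertex-disjoint and no edge joins a vertex of $c_i$ to a vertex of $c_j$ for $i\ne j$; $\nu(\mathcal G)$ is the maximum size of an independent set of odd cycles of $\mathcal G$. *)

theory Defs
  imports Complex_Main
begin

definition simple_graph :: "'a set \<Rightarrow> ('a \<Rightarrow> 'a \<Rightarrow> bool) \<Rightarrow> bool" where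
  "simple_graph V E \<longleftrightarrow> finite V \<and> (\<forall>u v. E u v \<longrightarrow> u \<in> V \<and> v \<in> V)
     \<and> (\<forall>u v. E u v \<longrightarrow> E v u) \<and> (\<forall>u. \<not> E u u)"

definition represented_by :: "'a set \<Rightarrow> ('a \<Rightarrow> 'a \<Rightarrow> bool) \<Rightarrow> 'b set \<Rightarrow> bool" where
  "represented_by V E T \<longleftrightarrow> (\<exists>f. (\<forall>v\<in>V. f v \<in> T) \<and>
     (\<forall>t1\<in>T. \<forall>t2\<in>T.
        (\<forall>u\<in>V. \<forall>v\<in>V. u \<noteq> v \<and> f u = t1 \<and> f v = t2 \<longrightarrow> E u v) \<or>
        (\<forall>u\<in>V. \<forall>v\<in>V. u \<noteq> v \<and> f u = t1 \<and> f v = t2 \<longrightarrow> \<not> E u v)) \<and>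
     (\<forall>u\<in>V. \<forall>v\<in>V. E u v \<longrightarrow> f u \<noteq> f v))"

definition odd_cycle :: "'a set \<Rightarrow> ('a \<Rightarrow> 'a \<Rightarrow> bool) \<Rightarrow> 'a list \<Rightarrow> bool" where
  "odd_cycle V E c \<longleftrightarrow> length c \<ge> 3 \<and> odd (length c) \<and> distinct c \<and> set c \<subseteq> V \<and>
     (\<forall>i < length c. E (c ! i) (c ! ((i + 1) mod length c)))"

definition indep_odd_cycles :: "'a set \<Rightarrow> ('a \<Rightarrow> 'a \<Rightarrow> bool) \<Rightarrow> 'a list set \<Rightarrow> bool" where
  "indep_odd_cycles V E C \<longleftrightarrow> (\<forall>c\<in>C. odd_cycle V E c) \<and>
     (\<forall>c1\<in>C. \<forall>c2\<in>C. c1 \<noteq> c2 \<longrightarrow>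
        set c1 \<inter> set c2 = {} \<and> (\<forall>u\<in>set c1. \<forall>v\<in>set c2. \<not> E u v))"

definition nu :: "'a set \<Rightarrow> ('a \<Rightarrow> 'a \<Rightarrow> bool) \<Rightarrow> nat" where
  "nu V E = Max {card C | C. indep_odd_cycles V E C}"

end

theory Submission
  imports Defs
begin

lemma odd_cycle_three_colors:
  assumes oc: "odd_cycle V E c"
    and prp: "\<forall>u\<in>V. \<forall>v\<in>V. E u v \<longrightarrow> f u \<noteq> f v"
  shows "card (f ` set c) \<ge> 3"
proof (rule ccontr)
  assume "\<not> ?thesis"
  hence le2: "card (f ` set c) \<le> 2" by simp
  define k where "k = length c"
  have k3: "k \<ge> 3" and ko: "odd k" and sub: "set c \<subseteq> V"
    and ed: "\<forall>i<k. E (c ! i) (c ! ((i + 1) mod k))"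
    using oc unfolding odd_cycle_def k_def by auto
  define a where "a = f (c ! 0)"
  have ain: "a \<in> f ` set c" using k3 unfolding a_def k_def by (metis image_eqI nth_mem le_trans not_less_eq_eq numeral_3_eq_3 zero_less_Suc linorder_not_le less_le_trans)
  obtain b where bsub: "f ` set c \<subseteq> {a, b}"
  proof (cases "f ` set c - {a} = {}")
    case True then show ?thesis using that by blast
  next
    case False
    then obtain b where b: "b \<in> f ` set c - {a}" by blast
    have "{a, b} \<subseteq> f ` set c" using ain b by auto
    moreover have "card {a, b} = 2" using b by auto
    moreover have "finite (f ` set c)" by simp
    ultimately have "{a, b} = f ` set c" using le2
      by (metis card_seteq)
    then show ?thesis using that by blast
  qed
  have inV: "\<And>i. i < k \<Longrightarrow> c ! i \<in> V" using sub unfolding k_def by auto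
  have inab: "\<And>i. i < k \<Longrightarrow> f (c ! i) \<in> {a, b}" using bsub nth_mem unfolding k_def by blast
  have alt: "\<And>i. i < k \<Longrightarrow> f (c ! i) = (if even i then a else b)"
  proof -
    fix i show "i < k \<Longrightarrow> f (c ! i) = (if even i then a else b)"
    proof (induction i)
      case 0 then show ?case by (simp add: a_def)
    next
      case (Suc i)
      have ik: "i < k" using Suc.prems by simp
      have "(i + 1) mod k = i + 1" using Suc.prems by simp
      hence "E (c ! i) (c ! (Suc i))" using ed ik by auto
      hence ne: "f (c ! i) \<noteq> f (c ! Suc i)" using prp inV ik Suc.prems by blast
      have IH: "f (c ! i) = (if even i then a else b)" using Suc.IH ik by simp
      have "f (c ! Suc i) \<in> {a, b}" using inab Suc.prems by blast
      then show ?case using ne IH by auto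
    qed
  qed
  have "k - 1 < k" using k3 by simp
  have ev: "even (k - 1)" using ko k3 by simp
  have "((k - 1) + 1) mod k = 0" using k3 by simp
  hence "E (c ! (k - 1)) (c ! 0)" using ed \<open>k - 1 < k\<close> by metis
  hence "f (c ! (k - 1)) \<noteq> f (c ! 0)" using prp inV k3 \<open>k - 1 < k\<close> by auto
  moreover have "f (c ! (k - 1)) = a" using alt[OF \<open>k - 1 < k\<close>] ev by simp
  ultimately show False unfolding a_def by simp
qed

lemma bound:
  assumes sg: "simple_graph V E" and fT: "finite T" and rep: "represented_by V E T"
    and ind: "indep_odd_cycles V E C" and fC: "finite C"
  shows "3 * card C \<le> card T"
proof -
  obtain f where fT': "\<forall>v\<in>V. f v \<in> T"
    and hom: "\<forall>t1\<in>T. \<forall>t2\<in>T.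
        (\<forall>u\<in>V. \<forall>v\<in>V. u \<noteq> v \<and> f u = t1 \<and> f v = t2 \<longrightarrow> E u v) \<or>
        (\<forall>u\<in>V. \<forall>v\<in>V. u \<noteq> v \<and> f u = t1 \<and> f v = t2 \<longrightarrow> \<not> E u v)"
    and prp: "\<forall>u\<in>V. \<forall>v\<in>V. E u v \<longrightarrow> f u \<noteq> f v"
    using rep unfolding represented_by_def by blast
  have oc: "\<And>c. c \<in> C \<Longrightarrow> odd_cycle V E c" using ind unfolding indep_odd_cycles_def by blast
  have disj: "\<And>c1 c2. c1 \<in> C \<Longrightarrow> c2 \<in> C \<Longrightarrow> c1 \<noteq> c2 \<Longrightarrow> f ` set c1 \<inter> f ` set c2 = {}"
  proof (rule ccontr)
    fix c1 c2 assume c1: "c1 \<in> C" and c2: "c2 \<in> C" and ne: "c1 \<noteq> c2"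
      and "f ` set c1 \<inter> f ` set c2 \<noteq> {}"
    then obtain u v where u: "u \<in> set c1" and v: "v \<in> set c2" and fuv: "f u = f v" by blast
    have dj: "set c1 \<inter> set c2 = {}" and noE: "\<forall>u\<in>set c1. \<forall>v\<in>set c2. \<not> E u v"
      using ind c1 c2 ne unfolding indep_odd_cycles_def by auto
    have o1: "odd_cycle V E c1" using oc c1 .
    then obtain i where i: "i < length c1" "c1 ! i = u" using u by (metis in_set_conv_nth)
    define u' where "u' = c1 ! ((i + 1) mod length c1)"
    have "E u u'" using o1 i unfolding odd_cycle_def u'_def by auto
    hence "E u' u" using sg unfolding simple_graph_def by blast
    have len: "length c1 > 0" using i(1) by (metis gr_implies_not0 neq0_conv)
    have u'in: "u' \<in> set c1" unfolding u'_def using len by (simp add: nth_mem)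
    have sub1: "set c1 \<subseteq> V" using o1 unfolding odd_cycle_def by simp
    have sub2: "set c2 \<subseteq> V" using oc[OF c2] unfolding odd_cycle_def by simp
    have uV: "u \<in> V" "u' \<in> V" "v \<in> V" using u u'in v sub1 sub2 by auto
    have "u' \<noteq> u" using \<open>E u' u\<close> sg unfolding simple_graph_def by blast
    have "u' \<noteq> v" using u'in v dj by blast
    have "\<not> E u' v" using noE u'in v by blast
    have T1: "f u' \<in> T" "f u \<in> T" using fT' uV by auto
    from hom[rule_format, OF T1] show False
      using \<open>E u' u\<close> \<open>\<not> E u' v\<close> \<open>u' \<noteq> u\<close> \<open>u' \<noteq> v\<close> uV fuv by metis
  qed
  have "3 * card C = (\<Sum>c\<in>C. 3)" by simp
  also have "\<dots> \<le> (\<Sum>c\<in>C. card (f ` set c))"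
    by (rule sum_mono) (use odd_cycle_three_colors[OF oc prp] in auto)
  also have "\<dots> = card (\<Union>c\<in>C. f ` set c)"
    by (rule card_UN_disjoint[symmetric]) (use fC disj in auto)
  also have "\<dots> \<le> card T"
  proof (rule card_mono[OF fT])
    show "(\<Union>c\<in>C. f ` set c) \<subseteq> T" using oc fT' unfolding odd_cycle_def by blast
  qed
  finally show ?thesis .
qed

theorem mainTheorem7:
  fixes V :: "'a set" and E :: "'a \<Rightarrow> 'a \<Rightarrow> bool" and T :: "'b set"
  assumes "simple_graph V E"
    and "finite T"
    and "represented_by V E T"
  shows "real (nu V E) \<le> real (card T) / 3"
proof -
  have fV: "finite V" using assms(1) unfolding simple_graph_def by simp
  let ?S = "{card C | C. indep_odd_cycles V E C}"
  have Csub: "\<And>C. indep_odd_cycles V E C \<Longrightarrow> C \<subseteq> {xs. set xs \<subseteq> V \<and> length xs \<le> card V}"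
  proof
    fix C c assume ind: "indep_odd_cycles V E C" and c: "c \<in> C"
    hence o: "odd_cycle V E c" unfolding indep_odd_cycles_def by blast
    hence "set c \<subseteq> V" "distinct c" unfolding odd_cycle_def by auto
    moreover have "length c = card (set c)" using \<open>distinct c\<close> by (simp add: distinct_card)
    moreover have "card (set c) \<le> card V" using \<open>set c \<subseteq> V\<close> fV by (simp add: card_mono)
    ultimately show "c \<in> {xs. set xs \<subseteq> V \<and> length xs \<le> card V}" by simp
  qed
  have fin: "\<And>C. indep_odd_cycles V E C \<Longrightarrow> finite C"
    using Csub finite_lists_length_le[OF fV] by (meson finite_subset)
  have "indep_odd_cycles V E {}" unfolding indep_odd_cycles_def by simp
  hence ne: "?S \<noteq> {}" by blast
  have bnd: "\<And>n. n \<in> ?S \<Longrightarrow> 3 * n \<le> card T"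
    using bound[OF assms] fin by blast
  have finS: "finite ?S"
  proof (rule finite_subset[of _ "{..card T}"])
    show "?S \<subseteq> {..card T}" using bnd by fastforce
  qed simp
  have "nu V E \<in> ?S" unfolding nu_def using Max_in[OF finS ne] .
  hence "3 * nu V E \<le> card T" using bnd by blast
  thus ?thesis by linarith
qed

end
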